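(* Let $\mathcal{X},\mathcal{Y}$ be finite sets, $P_X$ a probability distribution on $\mathcal{X}$ and $d:\mathcal{X}\times\mathcal{Y}\to[0,\infty)$. For every code $\mathcal{C}\subset\mathcal{Y}$ with $M$ codewords, $$D(P_X,\mathcal{C})=\tilde D\big(M^{-1},Q_Y^{\mathcal{C}}\big),$$ where $Q_Y^{\mathcal{C}}$ is the uniform distribution on $\mathcal{C}$. In particular, $D(P_X,R)\ge\inf_{Q_Y}\tilde D(e^{-R},Q_Y)$, the infimum over all probability distributions $Q_Y$ on $\mathcal{Y}$.
   Context: $D(P_X,\mathcal{C})=\mathbb{E}_{P_X}[\min_{y\in\mathcal{C}}d(X,y)]$ and $D(P_X,R)=\min_{\mathcal{C}\subset\mathcal{Y}:|\mathcal{C}|=e^R}D(P_X,\mathcal{C})$. For a distribution $Q_Y$ on $\mathcal{Y}$: $p_{c,x,y,u}=Q_Y\{y': d(x,y')<d(x,y)\}+u\cdot Q_Y\{y': d(x,y')=d(x,y)\}$ and, for $w\in(0,1]$, $\tilde D(w,Q_Y)=w^{-1}\mathbb{E}[d(X,Y)\mathbf{1}\{p_{c,X,Y,U}\le w\}]$ with $X\sim P_X$, $Y\sim Q_Y$, $U$ uniform on $[0,1]$ independent. *)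

theory Defs
  imports "HOL-Probability.Probability"
begin

definition D_code :: "'x pmf \<Rightarrow> ('x \<Rightarrow> 'y \<Rightarrow> real) \<Rightarrow> 'y set \<Rightarrow> real" where
  "D_code P d C = measure_pmf.expectation P (\<lambda>x. Min ((\<lambda>y. d x y) ` C))"

definition D_rate :: "'x pmf \<Rightarrow> ('x \<Rightarrow> 'y \<Rightarrow> real) \<Rightarrow> real \<Rightarrow> real" where
  "D_rate P d R = Min {D_code P d C | C. real (card C) = exp R}"

definition p_c :: "'y pmf \<Rightarrow> ('x \<Rightarrow> 'y \<Rightarrow> real) \<Rightarrow> 'x \<Rightarrow> 'y \<Rightarrow> real \<Rightarrow> real" where
  "p_c Q d x y u = measure_pmf.prob Q {y'. d x y' < d x y}
                   + u * measure_pmf.prob Q {y'. d x y' = d x y}"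

text \<open>D-tilde(w, Q_Y) = w^{-1} E[d(X,Y) 1{p_{c,X,Y,U} <= w}], X ~ P, Y ~ Q, U ~ Unif[0,1]
  independent (expectation written as iterated integral over the product).\<close>
definition D_tilde :: "'x pmf \<Rightarrow> ('x \<Rightarrow> 'y \<Rightarrow> real) \<Rightarrow> real \<Rightarrow> 'y pmf \<Rightarrow> real" where
  "D_tilde P d w Q = (1 / w) *
     measure_pmf.expectation P (\<lambda>x. measure_pmf.expectation Q (\<lambda>y.
        integral\<^sup>L (uniform_measure lborel {0..1::real})
          (\<lambda>u. d x y * (if p_c Q d x y u \<le> w then 1 else 0))))"

end

theory Submission
  imports Defs
begin

lemma unif_key:
  fixes t c :: real
  assumes "t \<le> 1"
  shows "integral\<^sup>L (uniform_measure lborel {0..1::real}) (\<lambda>u. c * (if u \<le> t then 1 else 0)) = c * max 0 t"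
proof -
  have eq: "(\<lambda>u::real. c * (if u \<le> t then 1 else 0)) = (\<lambda>u. c * indicator {..t} u)"
    by (auto simp: indicator_def)
  have "integral\<^sup>L (uniform_measure lborel {0..1::real}) (indicator {..t})
        = measure lborel ({0..1} \<inter> {..t}) / measure lborel {0..1::real}"
  proof -
    have "integral\<^sup>L (uniform_measure lborel {0..1::real}) (indicator {..t})
       = measure (uniform_measure lborel {0..1::real}) {..t}" by simp
    also have "\<dots> = measure lborel ({0..1} \<inter> {..t}) / measure lborel {0..1::real}"
      by (rule measure_uniform_measure) auto
    finally show ?thesis .
  qed
  also have "\<dots> = max 0 t"
  proof (cases "t < 0")
    case True
    then have "{0..1} \<inter> {..t} = ({}::real set)" by auto
    then show ?thesis using True by simp
  next
    case False
    then have "{0..1} \<inter> {..t} = {0..t}" using assms by auto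
    then show ?thesis using False by simp
  qed
  finally show ?thesis unfolding eq by simp
qed

lemma per_x:
  fixes d :: "'x \<Rightarrow> 'y \<Rightarrow> real"
  assumes fin: "finite C" and ne: "C \<noteq> {}"
  shows "(\<Sum>y\<in>C. integral\<^sup>L (uniform_measure lborel {0..1::real})
          (\<lambda>u. d x y * (if p_c (pmf_of_set C) d x y u \<le> 1 / real (card C) then 1 else 0)))
         = Min (d x ` C)"
proof -
  define M where "M = real (card C)"
  define m where "m = Min (d x ` C)"
  define K where "K = {y\<in>C. d x y = m}"
  have Mpos: "M > 0" unfolding M_def using fin ne by (simp add: card_gt_0_iff)
  have mC: "m \<in> d x ` C" unfolding m_def using fin ne by simp
  have mle: "\<And>y. y \<in> C \<Longrightarrow> m \<le> d x y" unfolding m_def using fin by simp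
  have finK: "finite K" unfolding K_def using fin by simp
  have Kne: "K \<noteq> {}" unfolding K_def using mC by auto
  define k where "k = real (card K)"
  have kpos: "k \<ge> 1" unfolding k_def using finK Kne
    by (metis One_nat_def Suc_leI card_gt_0_iff of_nat_1 of_nat_le_iff)
  have pc: "p_c (pmf_of_set C) d x y u = real (card (C \<inter> {y'. d x y' < d x y})) / M
      + u * (real (card (C \<inter> {y'. d x y' = d x y})) / M)" for y u
    unfolding p_c_def M_def using fin ne by (simp add: measure_pmf_of_set)
  have val: "integral\<^sup>L (uniform_measure lborel {0..1::real})
          (\<lambda>u. d x y * (if p_c (pmf_of_set C) d x y u \<le> 1 / M then 1 else 0))
          = (if y \<in> K then m / k else 0)" if yC: "y \<in> C" for y
  proof -
    define A where "A = real (card (C \<inter> {y'. d x y' < d x y})) / M"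
    define B where "B = real (card (C \<inter> {y'. d x y' = d x y})) / M"
    have cB: "card (C \<inter> {y'. d x y' = d x y}) \<ge> 1"
      using yC fin by (metis (mono_tags, lifting) IntI One_nat_def Suc_leI card_gt_0_iff empty_iff finite_Int mem_Collect_eq)
    have Bpos: "B \<ge> 1 / M" unfolding B_def using cB Mpos
      by (simp add: divide_right_mono)
    have Bp: "B > 0" using Bpos Mpos by (smt (verit) divide_pos_pos)
    have cond: "(p_c (pmf_of_set C) d x y u \<le> 1 / M) = (u \<le> (1 / M - A) / B)" for u
      unfolding pc A_def[symmetric] B_def[symmetric] using Bp
      by (simp add: pos_le_divide_eq algebra_simps)
    have t1: "(1 / M - A) / B \<le> 1"
    proof -
      have "A \<ge> 0" unfolding A_def using Mpos by simp
      then have "1 / M - A \<le> B" using Bpos by simp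
      then show ?thesis using Bp by (simp add: pos_divide_le_eq)
    qed
    have "integral\<^sup>L (uniform_measure lborel {0..1::real})
          (\<lambda>u. d x y * (if p_c (pmf_of_set C) d x y u \<le> 1 / M then 1 else 0))
        = d x y * max 0 ((1 / M - A) / B)"
      unfolding cond by (rule unif_key[OF t1])
    also have "\<dots> = (if y \<in> K then m / k else 0)"
    proof (cases "y \<in> K")
      case True
      then have dy: "d x y = m" unfolding K_def by simp
      have "C \<inter> {y'. d x y' < d x y} = {}" using mle dy by force
      then have A0: "A = 0" unfolding A_def by simp
      have "C \<inter> {y'. d x y' = d x y} = K" unfolding K_def using dy by auto
      then have "B = k / M" unfolding B_def k_def by simp
      then have "(1 / M - A) / B = 1 / k" using A0 Mpos kpos by (simp add: field_simps)
      then show ?thesis using True dy kpos by simp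
    next
      case False
      then have gt: "d x y > m" using mle[OF yC] yC unfolding K_def by auto
      have "K \<subseteq> C \<inter> {y'. d x y' < d x y}" unfolding K_def using gt by auto
      then have "card K \<le> card (C \<inter> {y'. d x y' < d x y})" using fin by (simp add: card_mono)
      then have "A \<ge> k / M" unfolding A_def k_def using Mpos by (simp add: divide_right_mono)
      moreover have "k / M \<ge> 1 / M" using kpos Mpos by (simp add: divide_right_mono)
      ultimately have "(1 / M - A) / B \<le> 0" using Bp by (simp add: divide_nonpos_pos)
      then show ?thesis using False by simp
    qed
    finally show ?thesis .
  qed
  have "(\<Sum>y\<in>C. integral\<^sup>L (uniform_measure lborel {0..1::real})
          (\<lambda>u. d x y * (if p_c (pmf_of_set C) d x y u \<le> 1 / real (card C) then 1 else 0)))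
      = (\<Sum>y\<in>C. (if y \<in> K then m / k else 0))"
    using val unfolding M_def by (intro sum.cong) auto
  also have "\<dots> = (\<Sum>y\<in>K. m / k)"
    using fin unfolding K_def by (simp add: sum.inter_filter[symmetric])
  also have "\<dots> = m" unfolding k_def using kpos k_def by simp
  finally show ?thesis unfolding m_def .
qed

lemma D_tilde_nonneg:
  assumes "\<And>x y. d x y \<ge> 0" and "w > 0"
  shows "D_tilde P d w Q \<ge> 0"
  unfolding D_tilde_def using assms
  by (intro mult_nonneg_nonneg integral_nonneg_AE AE_I2) auto

theorem theorem2:
  fixes P :: "'x::finite pmf" and d :: "'x \<Rightarrow> 'y::finite \<Rightarrow> real"
  assumes d_nonneg: "\<And>x y. d x y \<ge> 0"
  shows "(\<forall>C::'y set. C \<noteq> {} \<longrightarrow>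
            D_code P d C = D_tilde P d (1 / real (card C)) (pmf_of_set C))
       \<and> (\<forall>R::real. (\<exists>C::'y set. real (card C) = exp R) \<longrightarrow>
            D_rate P d R \<ge> (INF Q::'y pmf. D_tilde P d (exp (- R)) Q))"
proof -
  have part1: "D_code P d C = D_tilde P d (1 / real (card C)) (pmf_of_set C)"
    if ne: "C \<noteq> {}" for C :: "'y set"
  proof -
    have fin: "finite C" by simp
    have Mpos: "real (card C) > 0" using fin ne by (simp add: card_gt_0_iff)
    have "D_tilde P d (1 / real (card C)) (pmf_of_set C)
        = real (card C) * measure_pmf.expectation P (\<lambda>x. Min (d x ` C) / real (card C))"
      unfolding D_tilde_def
    proof -
      have "\<And>x. measure_pmf.expectation (pmf_of_set C) (\<lambda>y.
        integral\<^sup>L (uniform_measure lborel {0..1::real})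
          (\<lambda>u. d x y * (if p_c (pmf_of_set C) d x y u \<le> 1 / real (card C) then 1 else 0)))
         = Min (d x ` C) / real (card C)"
        by (subst integral_pmf_of_set[OF ne fin], subst per_x[OF fin ne]) (rule refl)
      then show "1 / (1 / real (card C)) *
    measure_pmf.expectation P (\<lambda>x. measure_pmf.expectation (pmf_of_set C) (\<lambda>y.
        integral\<^sup>L (uniform_measure lborel {0..1::real})
          (\<lambda>u. d x y * (if p_c (pmf_of_set C) d x y u \<le> 1 / real (card C) then 1 else 0))))
       = real (card C) * measure_pmf.expectation P (\<lambda>x. Min (d x ` C) / real (card C))"
        by simp
    qed
    also have "\<dots> = measure_pmf.expectation P (\<lambda>x. Min (d x ` C))"
      using Mpos ne by (simp only: integral_divide_zero) (simp add: ne)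
    finally show ?thesis unfolding D_code_def by simp
  qed
  have part2: "D_rate P d R \<ge> (INF Q::'y pmf. D_tilde P d (exp (- R)) Q)"
    if ex: "\<exists>C::'y set. real (card C) = exp R" for R
  proof -
    let ?S = "{D_code P d C | C::'y set. real (card C) = exp R}"
    have finS: "finite ?S"
    proof -
      have "?S \<subseteq> (\<lambda>C. D_code P d C) ` UNIV" by auto
      then show ?thesis by (rule finite_subset) simp
    qed
    have neS: "?S \<noteq> {}" using ex by auto
    have "D_rate P d R \<in> ?S" unfolding D_rate_def using finS neS by (rule Min_in)
    then obtain C :: "'y set" where cC: "real (card C) = exp R" and eq: "D_rate P d R = D_code P d C"
      by auto
    have ne: "C \<noteq> {}" using cC by (metis card.empty exp_gt_zero less_irrefl of_nat_0)
    have "1 / real (card C) = exp (- R)" using cC by (simp add: exp_minus field_simps)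
    then have "D_rate P d R = D_tilde P d (exp (- R)) (pmf_of_set C)"
      using eq part1[OF ne] by simp
    moreover have "(INF Q::'y pmf. D_tilde P d (exp (- R)) Q) \<le> D_tilde P d (exp (- R)) (pmf_of_set C)"
      by (rule cINF_lower) (auto intro!: bdd_belowI[where m=0] D_tilde_nonneg d_nonneg)
    ultimately show ?thesis by simp
  qed
  show ?thesis using part1 part2 by blast
qed

end
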